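(* Let $T$ be a minimal homeomorphism of a compact metric space $X$, let $G$ be a locally compact second countable group, and let $f\colon X\to G$ be a continuous regular cocycle. Let $C\subseteq X\times G$ be a surjective $\mathbf T_f$-orbit closure and $H=\mathrm{Stab}(C)$. Then for every point $(x,g)\in C$ whose $\mathbf T_f$-orbit is dense in $C$ we have $C_x=\{g'\in G:(x,g')\in C\}=gH$. Furthermore, the set $C/H=\{(x,gH):(x,g)\in C\}\subseteq X\times G/H$ is compact and $\mathbf T_f\colon C/H\to C/H$, $(x,gH)\mapsto(Tx,f(x)gH)$, is a minimal homeomorphism. In particular, for every $x\in X$ there exists a compact set $K_x\subseteq G$ with $C_x=K_xH$.
   Context: The cocycle is $f(n,x)=f(T^{n-1}x)\cdots f(x)$ for $n\ge1$, $f(0,x)=\mathbf 1_G$, $f(n,x)=f(-n,T^nx)^{-1}$ for $n<0$. The skew product is the homeomorphism $\mathbf T_f(x,g)=(Tx,f(x)g)$ of $X\times G$, so $\mathbf T_f^n(x,g)=(T^nx,f(n,x)g)$. A surjective $\mathbf T_f$-orbit closure is the closure of the $\mathbf T_f$-orbit $\{\mathbf T_f^n(x_0,g_0):n\in\mathbb Z\}$ of a single point which projects onto all of $X$ under the first coordinate projection; $f$ is called regular if such an orbit closure exists. For a closed set $C\subseteq X\times G$, $\mathrm{Stab}(C)=\{h\in G: R_h(C)=C\}$ where $R_h(x,g)=(x,gh^{-1})$; this is a closed subgroup. *)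

theory Defs
  imports "HOL-Analysis.Analysis"
begin

text \<open>Groups are written additively (class group_add, not necessarily commutative):
  the product g h of the paper is g + h, h inverse is - h, the unit is 0.\<close>

definition topological_group :: "'g::{group_add,topological_space} itself \<Rightarrow> bool" where
  "topological_group _ \<longleftrightarrow>
     continuous_on UNIV (\<lambda>p::'g \<times> 'g. fst p + snd p) \<and> continuous_on UNIV (uminus :: 'g \<Rightarrow> 'g)"

definition Tpow :: "('a \<Rightarrow> 'a) \<Rightarrow> int \<Rightarrow> 'a \<Rightarrow> 'a" where
  "Tpow T n x = (if 0 \<le> n then (T ^^ nat n) x else (inv T ^^ nat (- n)) x)"

definition minimal_homeo :: "('a::topological_space \<Rightarrow> 'a) \<Rightarrow> bool" where
  "minimal_homeo T \<longleftrightarrow> bij T \<and> continuous_on UNIV T \<and> continuous_on UNIV (inv T) \<and>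
     (\<forall>x. closure (range (\<lambda>n. Tpow T n x)) = UNIV)"

fun cocycle_nat :: "('a \<Rightarrow> 'a) \<Rightarrow> ('a \<Rightarrow> 'g::group_add) \<Rightarrow> nat \<Rightarrow> 'a \<Rightarrow> 'g" where
  "cocycle_nat T f 0 x = 0"
| "cocycle_nat T f (Suc n) x = f ((T ^^ n) x) + cocycle_nat T f n x"

definition cocycle :: "('a \<Rightarrow> 'a) \<Rightarrow> ('a \<Rightarrow> 'g::group_add) \<Rightarrow> int \<Rightarrow> 'a \<Rightarrow> 'g" where
  "cocycle T f n x = (if 0 \<le> n then cocycle_nat T f (nat n) x
                      else - cocycle_nat T f (nat (- n)) (Tpow T n x))"

definition skew :: "('a \<Rightarrow> 'a) \<Rightarrow> ('a \<Rightarrow> 'g::group_add) \<Rightarrow> 'a \<times> 'g \<Rightarrow> 'a \<times> 'g" where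
  "skew T f p = (T (fst p), f (fst p) + snd p)"

definition skew_pow :: "('a \<Rightarrow> 'a) \<Rightarrow> ('a \<Rightarrow> 'g::group_add) \<Rightarrow> int \<Rightarrow> 'a \<times> 'g \<Rightarrow> 'a \<times> 'g" where
  "skew_pow T f n p = (Tpow T n (fst p), cocycle T f n (fst p) + snd p)"

definition skew_orbit :: "('a \<Rightarrow> 'a) \<Rightarrow> ('a \<Rightarrow> 'g::group_add) \<Rightarrow> 'a \<times> 'g \<Rightarrow> ('a \<times> 'g) set" where
  "skew_orbit T f p = range (\<lambda>n. skew_pow T f n p)"

definition surj_orbit_closure ::
  "('a \<Rightarrow> 'a) \<Rightarrow> ('a \<Rightarrow> 'g::{group_add,topological_space}) \<Rightarrow> ('a::topological_space \<times> 'g) set \<Rightarrow> bool" where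
  "surj_orbit_closure T f C \<longleftrightarrow> (\<exists>p. C = closure (skew_orbit T f p)) \<and> fst ` C = UNIV"

definition regular_cocycle ::
  "('a::topological_space \<Rightarrow> 'a) \<Rightarrow> ('a \<Rightarrow> 'g::{group_add,topological_space}) \<Rightarrow> bool" where
  "regular_cocycle T f \<longleftrightarrow> (\<exists>C. surj_orbit_closure T f C)"

definition Stab :: "('a \<times> 'g::group_add) set \<Rightarrow> 'g set" where
  "Stab C = {h. (\<lambda>(x,g). (x, g + - h)) ` C = C}"

definition fibre :: "('a \<times> 'g) set \<Rightarrow> 'a \<Rightarrow> 'g set" where
  "fibre C x = {g'. (x, g') \<in> C}"

definition lcoset :: "'g::group_add \<Rightarrow> 'g set \<Rightarrow> 'g set" where
  "lcoset g H = (\<lambda>h. g + h) ` H"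

definition setprod :: "'g::group_add set \<Rightarrow> 'g set \<Rightarrow> 'g set" where
  "setprod K H = {k + h |k h. k \<in> K \<and> h \<in> H}"

definition coset_space_topology :: "'g::{group_add,topological_space} set \<Rightarrow> 'g set topology" where
  "coset_space_topology H =
     topology (\<lambda>U. U \<subseteq> range (\<lambda>g. lcoset g H) \<and> open {g. lcoset g H \<in> U})"

definition quot_set :: "('a \<times> 'g::group_add) set \<Rightarrow> 'g set \<Rightarrow> ('a \<times> 'g set) set" where
  "quot_set C H = (\<lambda>(x,g). (x, lcoset g H)) ` C"

definition quot_top :: "('a::topological_space \<times> 'g::{group_add,topological_space}) set \<Rightarrow> 'g set \<Rightarrow> ('a \<times> 'g set) topology" where
  "quot_top C H = subtopology (prod_topology euclidean (coset_space_topology H)) (quot_set C H)"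

definition quot_map :: "('a \<Rightarrow> 'a) \<Rightarrow> ('a \<Rightarrow> 'g::group_add) \<Rightarrow> 'a \<times> 'g set \<Rightarrow> 'a \<times> 'g set" where
  "quot_map T f p = (T (fst p), (\<lambda>a. f (fst p) + a) ` snd p)"

definition quot_pow :: "('a \<Rightarrow> 'a) \<Rightarrow> ('a \<Rightarrow> 'g::group_add) \<Rightarrow> int \<Rightarrow> 'a \<times> 'g set \<Rightarrow> 'a \<times> 'g set" where
  "quot_pow T f n p = (Tpow T n (fst p), (\<lambda>a. cocycle T f n (fst p) + a) ` snd p)"

end

theory Submission
  imports Defs
begin

lemma Tpow_succ:
  assumes "bij T" shows "Tpow T (n+1) x = T (Tpow T n x)"
proof (cases "0 \<le> n")
  case True
  then have "nat (n+1) = Suc (nat n)" by simp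
  then show ?thesis using True by (simp add: Tpow_def)
next
  case False
  define k where "k = nat (- n - 1)"
  have k: "n = - int k - 1" using False by (simp add: k_def)
  have "nat (- n) = Suc k" using k by simp
  moreover have "nat (-(n+1)) = k" using k by simp
  ultimately show ?thesis using False k assms
    by (auto simp add: Tpow_def bij_is_surj surj_f_inv_f)
qed

lemma Tpow_pred:
  assumes "bij T" shows "Tpow T (n-1) x = inv T (Tpow T n x)"
proof -
  have "Tpow T n x = T (Tpow T (n-1) x)" using Tpow_succ[OF assms, of "n-1" x] by simp
  then show ?thesis using assms by (simp add: bij_is_inj inv_f_f)
qed

lemma Tpow_0 [simp]: "Tpow T 0 x = x" by (simp add: Tpow_def)

lemma Tpow_add:
  assumes "bij T" shows "Tpow T (m+n) x = Tpow T m (Tpow T n x)"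
proof (induction m rule: int_induct[where k=0])
  case base then show ?case by simp
next
  case (step1 i)
  have "Tpow T (i + 1 + n) x = T (Tpow T (i+n) x)" using Tpow_succ[OF assms, of "i+n"] by (simp add: ac_simps)
  then show ?case using step1 Tpow_succ[OF assms] by simp
next
  case (step2 i)
  have e: "i - 1 + n = (i + n) - 1" by simp
  have "Tpow T (i - 1 + n) x = inv T (Tpow T (i+n) x)" unfolding e by (rule Tpow_pred[OF assms])
  then show ?case using step2 Tpow_pred[OF assms, of i] by simp
qed

lemma cocycle_nat_Suc': "cocycle_nat T f (Suc n) y = cocycle_nat T f n (T y) + f y"
proof (induction n)
  case 0 then show ?case by simp
next
  case (Suc n)
  have "cocycle_nat T f (Suc (Suc n)) y = f ((T ^^ Suc n) y) + cocycle_nat T f (Suc n) y" by simp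
  also have "\<dots> = f ((T ^^ n) (T y)) + (cocycle_nat T f n (T y) + f y)"
    using Suc by (simp add: funpow_swap1)
  finally show ?case by (simp add: add.assoc)
qed

lemma cocycle_0 [simp]: "cocycle T f 0 x = 0" by (simp add: cocycle_def)

lemma cocycle_succ:
  assumes "bij T" shows "cocycle T f (n+1) x = f (Tpow T n x) + cocycle T f n x"
proof (cases "0 \<le> n")
  case True
  then have "nat (n+1) = Suc (nat n)" by simp
  then show ?thesis using True by (simp add: cocycle_def Tpow_def)
next
  case False
  define k where "k = nat (- n - 1)"
  have k: "n = - int k - 1" using False by (simp add: k_def)
  define y where "y = Tpow T n x"
  have ny: "nat (- n) = Suc k" using k by simp
  show ?thesis
  proof (cases "k = 0")
    case True
    then have "n = -1" using k by simp
    then show ?thesis by (simp add: cocycle_def)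
  next
    case k0: False
    have n1: "\<not> 0 \<le> n + 1" using k k0 by simp
    have n1': "nat (-(n+1)) = k" using k by simp
    have Ty: "T y = Tpow T (n+1) x" using Tpow_succ[OF assms] y_def by simp
    have "cocycle T f n x = - cocycle_nat T f (Suc k) y"
      using False ny by (simp add: cocycle_def y_def[symmetric] del: cocycle_nat.simps(2))
    also have "\<dots> = - f y + - cocycle_nat T f k (T y)"
      by (simp only: cocycle_nat_Suc' minus_add)
    finally have "cocycle T f n x = - f y + - cocycle_nat T f k (T y)" .
    moreover have "cocycle T f (n+1) x = - cocycle_nat T f k (T y)"
      using n1 n1' Ty by (simp add: cocycle_def)
    ultimately show ?thesis unfolding y_def[symmetric] by (simp only: add_minus_cancel)
  qed
qed

lemma cocycle_pred:
  assumes "bij T" shows "cocycle T f (n-1) x = - f (Tpow T (n-1) x) + cocycle T f n x"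
  using cocycle_succ[OF assms, where n="n-1" and f=f and x=x] by (simp add: add.assoc[symmetric])

lemma cocycle_add:
  assumes "bij T" shows "cocycle T f (m+n) x = cocycle T f m (Tpow T n x) + cocycle T f n x"
proof (induction m rule: int_induct[where k=0])
  case base then show ?case by simp
next
  case (step1 i)
  have "cocycle T f (i + 1 + n) x = f (Tpow T (i+n) x) + cocycle T f (i+n) x"
    using cocycle_succ[OF assms, where n="i+n" and f=f and x=x] by (simp add: ac_simps)
  then show ?case using step1 cocycle_succ[OF assms, where n=i and f=f] Tpow_add[OF assms] by (simp add: add.assoc)
next
  case (step2 i)
  have e: "i - 1 + n = (i + n) - 1" by simp
  have "cocycle T f (i - 1 + n) x = - f (Tpow T (i - 1 + n) x) + cocycle T f (i+n) x"
    unfolding e by (rule cocycle_pred[OF assms])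
  then show ?case using step2 cocycle_pred[OF assms, where n=i and f=f] Tpow_add[OF assms] by (simp add: add.assoc)
qed

lemma skew_pow_add:
  assumes "bij T" shows "skew_pow T f (m+n) p = skew_pow T f m (skew_pow T f n p)"
  by (simp add: skew_pow_def Tpow_add[OF assms] cocycle_add[OF assms] add.assoc)

lemma skew_pow_0 [simp]: "skew_pow T f 0 p = p" by (simp add: skew_pow_def)

lemma skew_orbit_shift:
  assumes "bij T" shows "skew_orbit T f (skew_pow T f n p) = skew_orbit T f p"
proof
  show "skew_orbit T f (skew_pow T f n p) \<subseteq> skew_orbit T f p"
  proof
    fix q assume "q \<in> skew_orbit T f (skew_pow T f n p)"
    then obtain m where "q = skew_pow T f m (skew_pow T f n p)" by (auto simp: skew_orbit_def)
    then have "q = skew_pow T f (m+n) p" by (simp add: skew_pow_add[OF assms])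
    then show "q \<in> skew_orbit T f p" by (auto simp: skew_orbit_def)
  qed
  show "skew_orbit T f p \<subseteq> skew_orbit T f (skew_pow T f n p)"
  proof
    fix q assume "q \<in> skew_orbit T f p"
    then obtain m where "q = skew_pow T f m p" by (auto simp: skew_orbit_def)
    then have "q = skew_pow T f (m-n) (skew_pow T f n p)"
      using skew_pow_add[OF assms, where m="m-n" and n=n and p=p and f=f] by simp
    then show "q \<in> skew_orbit T f (skew_pow T f n p)" by (auto simp: skew_orbit_def)
  qed
qed


section \<open>Topological group helpers\<close>

lemma tg_add_cont:
  fixes a b :: "'x::topological_space \<Rightarrow> 'g::{group_add,topological_space}"
  assumes "topological_group TYPE('g)" "continuous_on S a" "continuous_on S b"
  shows "continuous_on S (\<lambda>x. a x + b x)"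
proof -
  have c: "continuous_on UNIV (\<lambda>p::'g \<times> 'g. fst p + snd p)"
    using assms(1) by (simp add: topological_group_def)
  have "continuous_on S (\<lambda>x. (a x, b x))" using assms(2,3) by (rule continuous_on_Pair)
  from continuous_on_compose2[OF c this] show ?thesis by simp
qed

lemma tg_minus_cont:
  fixes a :: "'x::topological_space \<Rightarrow> 'g::{group_add,topological_space}"
  assumes "topological_group TYPE('g)" "continuous_on S a"
  shows "continuous_on S (\<lambda>x. - a x)"
proof -
  have c: "continuous_on UNIV (uminus :: 'g \<Rightarrow> 'g)"
    using assms(1) by (simp add: topological_group_def)
  from continuous_on_compose2[OF c assms(2)] show ?thesis by simp
qed

lemma funpow_cont:
  fixes T :: "'a::topological_space \<Rightarrow> 'a"
  assumes "continuous_on UNIV T" shows "continuous_on UNIV (T ^^ k)"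
proof (induction k)
  case 0
  have "T ^^ 0 = (\<lambda>x. x)" by (simp add: fun_eq_iff)
  then show ?case by (simp add: continuous_on_id)
next
  case (Suc k)
  have "continuous_on UNIV (\<lambda>x. T ((T ^^ k) x))"
    by (rule continuous_on_compose2[OF assms Suc]) auto
  then show ?case by (simp add: o_def)
qed

lemma Tpow_cont:
  assumes "continuous_on UNIV T" "continuous_on UNIV (inv T)"
  shows "continuous_on UNIV (Tpow T n)"
proof (cases "0 \<le> n")
  case True
  then have "Tpow T n = T ^^ nat n" by (auto simp: Tpow_def)
  then show ?thesis using funpow_cont[OF assms(1)] by simp
next
  case False
  then have "Tpow T n = inv T ^^ nat (-n)" by (auto simp: Tpow_def)
  then show ?thesis using funpow_cont[OF assms(2)] by simp
qed

lemma cocycle_nat_cont: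
  assumes "topological_group TYPE('g)" "continuous_on UNIV T" "continuous_on UNIV (f :: _ \<Rightarrow> 'g::{group_add,topological_space})"
  shows "continuous_on UNIV (cocycle_nat T f k)"
proof (induction k)
  case 0 then show ?case by (simp add: continuous_on_const)
next
  case (Suc k)
  have "continuous_on UNIV (\<lambda>x. f ((T ^^ k) x))"
    by (rule continuous_on_compose2[OF assms(3) funpow_cont[OF assms(2)]]) auto
  then have "continuous_on UNIV (\<lambda>x. f ((T ^^ k) x) + cocycle_nat T f k x)"
    using tg_add_cont[OF assms(1) _ Suc] by blast
  then show ?case by simp
qed

lemma cocycle_cont:
  assumes "topological_group TYPE('g)" "continuous_on UNIV T" "continuous_on UNIV (inv T)"
    "continuous_on UNIV (f :: _ \<Rightarrow> 'g::{group_add,topological_space})"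
  shows "continuous_on UNIV (cocycle T f n)"
proof (cases "0 \<le> n")
  case True
  then have "cocycle T f n = cocycle_nat T f (nat n)" by (auto simp: cocycle_def)
  then show ?thesis using cocycle_nat_cont[OF assms(1,2,4)] by simp
next
  case False
  then have e: "cocycle T f n = (\<lambda>x. - cocycle_nat T f (nat (-n)) (Tpow T n x))"
    by (auto simp: cocycle_def)
  have "continuous_on UNIV (\<lambda>x. cocycle_nat T f (nat (-n)) (Tpow T n x))"
    by (rule continuous_on_compose2[OF cocycle_nat_cont[OF assms(1,2,4)] Tpow_cont[OF assms(2,3)]]) auto
  then show ?thesis unfolding e by (rule tg_minus_cont[OF assms(1)])
qed

lemma skew_pow_cont:
  assumes "topological_group TYPE('g)" "continuous_on UNIV T" "continuous_on UNIV (inv T)"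
    "continuous_on UNIV (f :: _ \<Rightarrow> 'g::{group_add,topological_space})"
  shows "continuous_on UNIV (skew_pow T f n)"
proof -
  have c1: "continuous_on UNIV (\<lambda>p::_ \<times> 'g. Tpow T n (fst p))"
    by (rule continuous_on_compose2[OF Tpow_cont[OF assms(2,3)] continuous_on_fst]) (auto intro: continuous_on_id)
  have c2: "continuous_on UNIV (\<lambda>p::_ \<times> 'g. cocycle T f n (fst p))"
    by (rule continuous_on_compose2[OF cocycle_cont[OF assms] continuous_on_fst]) (auto intro: continuous_on_id)
  have c3: "continuous_on UNIV (\<lambda>p::_ \<times> 'g. cocycle T f n (fst p) + snd p)"
    by (rule tg_add_cont[OF assms(1) c2 continuous_on_snd[OF continuous_on_id]])
  show ?thesis unfolding skew_pow_def[abs_def] by (rule continuous_on_Pair[OF c1 c3])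
qed

definition Rm :: "'g::group_add \<Rightarrow> 'a \<times> 'g \<Rightarrow> 'a \<times> 'g" where
  "Rm h p = (fst p, snd p + - h)"

lemma Rm_cont:
  assumes "topological_group TYPE('g::{group_add,topological_space})"
  shows "continuous_on UNIV (Rm (h::'g) :: 'a::topological_space \<times> 'g \<Rightarrow> _)"
proof -
  have "continuous_on UNIV (\<lambda>p::'a \<times> 'g. snd p + - h)"
    by (rule tg_add_cont[OF assms continuous_on_snd[OF continuous_on_id] continuous_on_const])
  then show ?thesis unfolding Rm_def[abs_def]
    by (intro continuous_on_Pair continuous_on_fst continuous_on_id)
qed

lemma Rm_skew_pow: "Rm h (skew_pow T f n p) = skew_pow T f n (Rm h p)"
  by (simp add: Rm_def skew_pow_def add_diff_eq)

lemma Hausdorff_t2: "Hausdorff_space (euclidean :: 'g::t2_space topology)"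
  unfolding Hausdorff_space_def disjnt_def by (simp, meson hausdorff)

lemma closed_setprod:
  fixes K H :: "'g::{group_add,topological_space} set"
  assumes tg: "topological_group TYPE('g)" and K: "compact K" and H: "closed H"
  shows "closed (setprod K H)"
proof -
  have "open (- setprod K H)"
  proof (subst open_subopen, intro ballI)
    fix a assume a: "a \<in> - setprod K H"
    define W where "W = (\<lambda>p::'g \<times> 'g. - snd p + fst p) -` (- H)"
    have cW: "continuous_on UNIV (\<lambda>p::'g \<times> 'g. - snd p + fst p)"
      by (intro tg_add_cont[OF tg] tg_minus_cont[OF tg] continuous_on_fst continuous_on_snd continuous_on_id)
    have oW: "open W" unfolding W_def using H by (intro open_vimage[OF _ cW]) auto
    have "{a} \<times> K \<subseteq> W"
    proof
      fix p assume "p \<in> {a} \<times> K"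
      then obtain k where p: "p = (a, k)" "k \<in> K" by auto
      have "- k + a \<notin> H"
      proof
        assume "- k + a \<in> H"
        moreover have "a = k + (- k + a)" by (simp add: add.assoc[symmetric])
        ultimately have "a \<in> setprod K H" using p(2) unfolding setprod_def by blast
        then show False using a by auto
      qed
      then show "p \<in> W" using p unfolding W_def by auto
    qed
    from Elementary_Topology.tube_lemma[OF K oW this] obtain X0 where X0: "a \<in> X0" "open X0" "X0 \<times> K \<subseteq> W" by auto
    have "X0 \<subseteq> - setprod K H"
    proof
      fix a' assume a': "a' \<in> X0"
      show "a' \<in> - setprod K H"
      proof
        assume "a' \<in> setprod K H"
        then obtain k h where kh: "a' = k + h" "k \<in> K" "h \<in> H" unfolding setprod_def by auto
        then have "(a', k) \<in> W" using X0(3) a' by auto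
        then have "- k + a' \<notin> H" unfolding W_def by auto
        moreover have "- k + a' = h" using kh(1) by (simp add: add.assoc[symmetric])
        ultimately show False using kh(3) by auto
      qed
    qed
    then show "\<exists>T. open T \<and> a \<in> T \<and> T \<subseteq> - setprod K H" using X0 by blast
  qed
  then show ?thesis by (simp add: closed_def)
qed

locale skewsys =
  fixes T :: "'a::metric_space \<Rightarrow> 'a"
    and f :: "'a \<Rightarrow> 'g::{group_add, t2_space, second_countable_topology}"
    and C :: "('a \<times> 'g) set"
    and p0 :: "'a \<times> 'g"
  assumes Xc: "compact (UNIV :: 'a set)"
    and bijT: "bij T"
    and contT: "continuous_on UNIV T"
    and contiT: "continuous_on UNIV (inv T)"
    and minT: "\<And>x. closure (range (\<lambda>n. Tpow T n x)) = UNIV"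
    and tg: "topological_group TYPE('g)"
    and lc: "locally_compact_space (euclidean :: 'g topology)"
    and fc: "continuous_on UNIV f"
    and Cdef: "C = closure (skew_orbit T f p0)"
    and Csurj: "fst ` C = UNIV"
begin

lemma closedC: "closed C" by (simp add: Cdef)

lemma p0C: "p0 \<in> C"
proof -
  have "p0 = skew_pow T f 0 p0" by simp
  then have "p0 \<in> skew_orbit T f p0" unfolding skew_orbit_def by blast
  then show ?thesis unfolding Cdef using closure_subset by blast
qed

lemma spc: "continuous_on UNIV (skew_pow T f n)"
  by (rule skew_pow_cont[OF tg contT contiT fc])

lemma invC: "q \<in> C \<Longrightarrow> skew_pow T f n q \<in> C"
proof -
  assume q: "q \<in> C"
  have "skew_pow T f n ` skew_orbit T f p0 \<subseteq> C"
  proof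
    fix r assume "r \<in> skew_pow T f n ` skew_orbit T f p0"
    then obtain m where "r = skew_pow T f n (skew_pow T f m p0)" unfolding skew_orbit_def by auto
    then have "r = skew_pow T f (n+m) p0" by (simp add: skew_pow_add[OF bijT])
    then have "r \<in> skew_orbit T f p0" unfolding skew_orbit_def by blast
    then show "r \<in> C" unfolding Cdef using closure_subset by blast
  qed
  then have "skew_pow T f n ` closure (skew_orbit T f p0) \<subseteq> C"
    by (intro image_closure_subset continuous_on_subset[OF spc] closedC) auto
  then show ?thesis using q Cdef by auto
qed

lemma orbit_subC: "q \<in> C \<Longrightarrow> closure (skew_orbit T f q) \<subseteq> C"
  by (intro closure_minimal closedC) (auto simp: skew_orbit_def invC)

lemma trans_shift: "closure (skew_orbit T f (skew_pow T f n p0)) = C"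
  by (simp add: skew_orbit_shift[OF bijT] Cdef)

definition Sig :: "'g set" where "Sig = {h. \<forall>q\<in>C. Rm h q \<in> C}"

lemma SigD: "h \<in> Sig \<Longrightarrow> (x, g) \<in> C \<Longrightarrow> (x, g + - h) \<in> C"
  unfolding Sig_def Rm_def by force

lemma lemE:
  assumes tr: "closure (skew_orbit T f (x, g)) = C" and g': "(x, g') \<in> C"
  shows "- g' + g \<in> Sig"
proof -
  define h where "h = - g' + g"
  have Rh: "Rm h (x, g) = (x, g')" by (simp add: Rm_def h_def minus_add add.assoc)
  have "Rm h ` skew_orbit T f (x, g) \<subseteq> C"
  proof
    fix r assume "r \<in> Rm h ` skew_orbit T f (x, g)"
    then obtain n where "r = Rm h (skew_pow T f n (x, g))" unfolding skew_orbit_def by auto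
    then have "r = skew_pow T f n (x, g')" by (simp add: Rm_skew_pow Rh)
    then show "r \<in> C" using invC g' by simp
  qed
  then have "Rm h ` closure (skew_orbit T f (x, g)) \<subseteq> C"
    by (intro image_closure_subset continuous_on_subset[OF Rm_cont[OF tg]] closedC) auto
  then show ?thesis unfolding tr Sig_def h_def by auto
qed

lemma Sig_closed: "closed Sig"
proof -
  have "Sig = (\<Inter>q\<in>C. (\<lambda>h. Rm h q) -` C)" unfolding Sig_def by auto
  moreover have "closed ((\<lambda>h. Rm h q) -` C)" for q
  proof -
    have "continuous_on UNIV (\<lambda>h::'g. snd q + - h)"
      by (intro tg_add_cont[OF tg] tg_minus_cont[OF tg] continuous_on_const continuous_on_id)
    then have "continuous_on UNIV (\<lambda>h::'g. Rm h q)" unfolding Rm_def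
      by (intro continuous_on_Pair continuous_on_const)
    then show ?thesis by (rule closed_vimage[OF closedC])
  qed
  ultimately show ?thesis by auto
qed

end

context skewsys
begin

lemma nbhd_base:
  fixes W :: "'g set"
  assumes "open W" "b \<in> W"
  shows "\<exists>U V. open U \<and> compact V \<and> closed V \<and> b \<in> U \<and> U \<subseteq> V \<and> V \<subseteq> W"
proof -
  have reg: "regular_space (euclidean :: 'g topology)"
    by (rule locally_compact_Hausdorff_imp_regular_space[OF lc Hausdorff_t2])
  have "neighbourhood_base_of (\<lambda>C. compactin euclidean C \<and> closedin euclidean C) (euclidean :: 'g topology)"
    using locally_compact_regular_space_neighbourhood_base lc reg by blast
  then show ?thesis using assms
    unfolding neighbourhood_base_of_def neighbourhood_base_at_def by simp
qed

lemma countable_compact_family: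
  "\<exists>Qs::'g set set. countable Qs \<and> (\<forall>Q\<in>Qs. compact Q) \<and>
      (\<forall>W b. open W \<and> b \<in> W \<longrightarrow> (\<exists>Q\<in>Qs. b \<in> Q \<and> Q \<subseteq> W))"
proof -
  obtain B :: "'g set set" where B: "countable B" "topological_basis B" using ex_countable_basis by blast
  define Qs where "Qs = closure ` {B' \<in> B. compact (closure B')}"
  have "countable Qs" unfolding Qs_def using B(1) by simp
  moreover have "\<forall>Q\<in>Qs. compact Q" unfolding Qs_def by auto
  moreover have "\<exists>Q\<in>Qs. b \<in> Q \<and> Q \<subseteq> W" if W: "open W" "b \<in> W" for W b
  proof -
    obtain U V where UV: "open U" "compact V" "closed V" "b \<in> U" "U \<subseteq> V" "V \<subseteq> W"
      using nbhd_base[OF W] by blast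
    obtain B' where B': "B' \<in> B" "b \<in> B'" "B' \<subseteq> U" using topological_basisE[OF B(2) UV(1,4)] by blast
    have cl: "closure B' \<subseteq> V" using B'(3) UV(3,5) by (meson closure_minimal order_trans)
    have "compact (V \<inter> closure B')" by (rule compact_Int_closed[OF UV(2) closed_closure])
    moreover have "V \<inter> closure B' = closure B'" using cl by blast
    ultimately have "compact (closure B')" by simp
    then have "closure B' \<in> Qs" unfolding Qs_def using B'(1) by blast
    then show ?thesis using cl UV(6) B'(2) closure_subset by blast
  qed
  ultimately show ?thesis by blast
qed

lemma lsc_point:
  "\<exists>y. \<forall>b. (y, b) \<in> C \<longrightarrow> (\<forall>V. open V \<and> b \<in> V \<longrightarrow>
        (\<exists>W. open W \<and> y \<in> W \<and> (\<forall>y'\<in>W. \<exists>u\<in>V. (y', u) \<in> C)))"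
proof -
  obtain Qs :: "'g set set" where Qs: "countable Qs" "\<forall>Q\<in>Qs. compact Q"
      "\<forall>W b. open W \<and> b \<in> W \<longrightarrow> (\<exists>Q\<in>Qs. b \<in> Q \<and> Q \<subseteq> W)"
    using countable_compact_family by blast
  define F where "F Q = fst ` (C \<inter> (UNIV \<times> Q))" for Q
  have Fc: "closed (F Q)" if "Q \<in> Qs" for Q
  proof -
    have "compact ((UNIV \<times> Q) \<inter> C)"
      using compact_Int_closed[OF compact_Times[OF Xc] closedC] Qs(2) that by blast
    moreover have "F Q = fst ` ((UNIV \<times> Q) \<inter> C)" by (simp add: F_def Int_commute)
    ultimately have "compact (F Q)"
      using compact_continuous_image[OF continuous_on_fst[OF continuous_on_id]] by metis
    then show ?thesis by (rule compact_imp_closed)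
  qed
  define G where "G = (\<lambda>Q. F Q - interior (F Q)) ` Qs"
  have lcX: "locally_compact_space (euclidean :: 'a topology)"
    by (rule compact_imp_locally_compact_space) (simp add: compact_space_def Xc)
  have regX: "regular_space (euclidean :: 'a topology)"
    by (rule locally_compact_Hausdorff_imp_regular_space[OF lcX Hausdorff_space_euclidean])
  have "euclidean interior_of \<Union>G = {}"
  proof (rule Baire_category_alt)
    show "completely_metrizable_space (euclidean :: 'a topology) \<or>
          locally_compact_space (euclidean :: 'a topology) \<and> regular_space (euclidean :: 'a topology)"
      using lcX regX by blast
    show "countable G" unfolding G_def using Qs(1) by simp
    fix S assume "S \<in> G"
    then obtain Q where Q: "Q \<in> Qs" "S = F Q - interior (F Q)" unfolding G_def by blast
    have "closed S" using Q Fc by (simp add: closed_Diff)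
    moreover have "interior S = {}"
    proof -
      have "interior S \<subseteq> interior (F Q)" using Q(2) by (intro interior_mono) blast
      moreover have "interior S \<subseteq> S" by (rule interior_subset)
      ultimately show ?thesis using Q(2) by blast
    qed
    ultimately show "closedin euclidean S \<and> euclidean interior_of S = {}" by simp
  qed
  then have "\<Union>G \<noteq> UNIV" by (intro notI) simp
  then obtain y where y: "y \<notin> \<Union>G" by blast
  show ?thesis
  proof (intro exI[of _ y] allI impI)
    fix b V assume bC: "(y, b) \<in> C" and V: "open V \<and> b \<in> V"
    then obtain Q where Q: "Q \<in> Qs" "b \<in> Q" "Q \<subseteq> V" using Qs(3) by blast
    have "y \<in> F Q" unfolding F_def using bC Q(2) by force
    moreover have "y \<notin> F Q - interior (F Q)" using y Q(1) unfolding G_def by blast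
    ultimately have yi: "y \<in> interior (F Q)" by blast
    have "\<forall>y'\<in>interior (F Q). \<exists>u\<in>V. (y', u) \<in> C"
    proof
      fix y' assume "y' \<in> interior (F Q)"
      then have "y' \<in> F Q" using interior_subset by blast
      then obtain u where "(y', u) \<in> C" "u \<in> Q" unfolding F_def by force
      then show "\<exists>u\<in>V. (y', u) \<in> C" using Q(3) by blast
    qed
    then show "\<exists>W. open W \<and> y \<in> W \<and> (\<forall>y'\<in>W. \<exists>u\<in>V. (y', u) \<in> C)"
      using yi by (intro exI[of _ "interior (F Q)"]) auto
  qed
qed

lemma Sig_sym:
  assumes s: "s \<in> Sig" shows "- s \<in> Sig"
proof (rule ccontr)
  assume ns: "- s \<notin> Sig"
  obtain y where y: "\<And>b V. (y, b) \<in> C \<Longrightarrow> open V \<Longrightarrow> b \<in> V \<Longrightarrow>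
        (\<exists>W. open W \<and> y \<in> W \<and> (\<forall>y'\<in>W. \<exists>u\<in>V. (y', u) \<in> C))"
    using lsc_point by blast
  have "y \<in> fst ` C" using Csurj by simp
  then obtain q where q: "q \<in> C" "y = fst q" by blast
  obtain b where bC: "(y, b) \<in> C" using q by (cases q) auto
  define b' where "b' = b + - s"
  have b'C: "(y, b') \<in> C" unfolding b'_def by (rule SigD[OF s bC])
  define N where "N = - Sig"
  have oN: "open N" unfolding N_def using Sig_closed by (simp add: open_Compl)
  define \<phi> where "\<phi> = (\<lambda>p::'g \<times> 'g. - fst p + snd p)"
  have c\<phi>: "continuous_on UNIV \<phi>" unfolding \<phi>_def
    by (intro tg_add_cont[OF tg] tg_minus_cont[OF tg] continuous_on_fst continuous_on_snd continuous_on_id)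
  have "\<phi> (b, b') = - s" unfolding \<phi>_def b'_def by (simp only: fst_conv snd_conv minus_add_cancel)
  then have "(b, b') \<in> \<phi> -` N" using ns unfolding N_def by simp
  moreover have "open (\<phi> -` N)" by (rule open_vimage[OF oN c\<phi>])
  ultimately obtain A B where AB: "open A" "open B" "(b, b') \<in> A \<times> B" "A \<times> B \<subseteq> \<phi> -` N"
    by (rule_tac open_prod_elim[of "\<phi> -` N" "(b, b')"]) auto
  obtain W where W: "open W" "y \<in> W" "\<forall>y'\<in>W. \<exists>u\<in>A. (y', u) \<in> C"
    using y[OF bC AB(1)] AB(3) by auto
  have "(W \<times> B) \<inter> closure (skew_orbit T f p0) \<noteq> {}"
    using b'C W(2) AB(3) Cdef by auto
  then have "(W \<times> B) \<inter> skew_orbit T f p0 \<noteq> {}"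
    using open_Int_closure_eq_empty[OF open_Times[OF W(1) AB(2)]] by blast
  then obtain r where r: "r \<in> W \<times> B" "r \<in> skew_orbit T f p0" by blast
  then obtain n where "r = skew_pow T f n p0" unfolding skew_orbit_def by blast
  then have n: "skew_pow T f n p0 \<in> W \<times> B" using r(1) by simp
  obtain x' t where xt: "skew_pow T f n p0 = (x', t)" by (cases "skew_pow T f n p0")
  have trn: "closure (skew_orbit T f (x', t)) = C" using trans_shift[of n] xt by simp
  obtain u where u: "u \<in> A" "(x', u) \<in> C" using W(3) n xt by auto
  have "- u + t \<in> Sig" by (rule lemE[OF trn u(2)])
  moreover have "(u, t) \<in> A \<times> B" using u n xt by auto
  then have "- u + t \<in> N" using AB(4) unfolding \<phi>_def by auto
  ultimately show False unfolding N_def by auto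
qed

lemma Sig_zero: "0 \<in> Sig" unfolding Sig_def Rm_def by simp

lemma Sig_add:
  assumes "a \<in> Sig" "b \<in> Sig" shows "a + b \<in> Sig"
proof -
  have "\<forall>q\<in>C. Rm (a + b) q \<in> C"
  proof
    fix q assume q: "q \<in> C"
    obtain x g where qe: "q = (x, g)" by (cases q)
    have "(x, g + - b) \<in> C" using SigD[OF assms(2)] q qe by simp
    then have "(x, g + - b + - a) \<in> C" by (rule SigD[OF assms(1)])
    moreover have "g + - b + - a = g + - (a + b)" by (metis add.assoc minus_add)
    ultimately have "(x, g + - (a + b)) \<in> C" by metis
    then show "Rm (a + b) q \<in> C" unfolding qe Rm_def by simp
  qed
  then show ?thesis unfolding Sig_def by simp
qed

lemma Stab_eq: "Stab C = Sig"
proof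
  show "Stab C \<subseteq> Sig"
  proof
    fix h assume "h \<in> Stab C"
    then have e: "(\<lambda>(x,g). (x, g + - h)) ` C = C" unfolding Stab_def by simp
    have "\<forall>q\<in>C. Rm h q \<in> C"
    proof
      fix q assume "q \<in> C"
      then have "(\<lambda>(x,g). (x, g + - h)) q \<in> C" using e by blast
      then show "Rm h q \<in> C" by (cases q) (simp add: Rm_def)
    qed
    then show "h \<in> Sig" unfolding Sig_def by simp
  qed
  show "Sig \<subseteq> Stab C"
  proof
    fix h assume h: "h \<in> Sig"
    have "(\<lambda>(x,g). (x, g + - h)) ` C \<subseteq> C" using SigD[OF h] by auto
    moreover have "C \<subseteq> (\<lambda>(x,g). (x, g + - h)) ` C"
    proof
      fix q assume q: "q \<in> C"
      obtain x g where qe: "q = (x, g)" by (cases q)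
      have "(x, g + - (- h)) \<in> C" using SigD[OF Sig_sym[OF h]] q qe by simp
      moreover have "q = (\<lambda>(x,g). (x, g + - h)) (x, g + - (- h))" using qe by (simp add: add.assoc)
      ultimately show "q \<in> (\<lambda>(x,g). (x, g + - h)) ` C" by blast
    qed
    ultimately show "h \<in> Stab C" unfolding Stab_def by blast
  qed
qed

end

context skewsys
begin

lemma meets_orbit:
  assumes "open W" "W \<noteq> {}"
  shows "\<exists>n. Tpow T n y \<in> W"
proof -
  have "W \<inter> closure (range (\<lambda>n. Tpow T n y)) \<noteq> {}" using minT assms(2) by simp
  then have "W \<inter> range (\<lambda>n. Tpow T n y) \<noteq> {}" using open_Int_closure_eq_empty[OF assms(1)] by blast
  then show ?thesis by blast
qed

lemma K1: "\<exists>W U V. open W \<and> W \<noteq> {} \<and> compact V \<and> U \<subseteq> V \<and> (\<forall>y'\<in>W. \<exists>u\<in>U. (y', u) \<in> C)"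
proof -
  obtain z where z: "\<And>b V. (z, b) \<in> C \<Longrightarrow> open V \<Longrightarrow> b \<in> V \<Longrightarrow>
        (\<exists>W. open W \<and> z \<in> W \<and> (\<forall>y'\<in>W. \<exists>u\<in>V. (y', u) \<in> C))"
    using lsc_point by blast
  have "z \<in> fst ` C" using Csurj by simp
  then obtain q where q: "q \<in> C" "z = fst q" by blast
  obtain b where bC: "(z, b) \<in> C" using q by (cases q) auto
  obtain U V where UV: "open U" "compact V" "b \<in> U" "U \<subseteq> V"
    using nbhd_base[of UNIV b] by auto
  obtain W where W: "open W" "z \<in> W" "\<forall>y'\<in>W. \<exists>u\<in>U. (y', u) \<in> C"
    using z[OF bC UV(1,3)] by blast
  have "W \<noteq> {}" using W(2) by blast
  then show ?thesis using W(1,3) UV(2,4) by blast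
qed

lemma K2:
  assumes W: "open W" "W \<noteq> {}"
  shows "\<exists>N. finite N \<and> (\<forall>y. \<exists>n\<in>N. Tpow T n y \<in> W)"
proof -
  have cover: "UNIV \<subseteq> (\<Union>n\<in>(UNIV::int set). Tpow T n -` W)"
  proof
    fix y :: 'a
    from meets_orbit[OF W, where y=y] obtain n where n: "Tpow T n y \<in> W" by (elim exE)
    have "y \<in> Tpow T n -` W" using n by simp
    then show "y \<in> (\<Union>n\<in>(UNIV::int set). Tpow T n -` W)" by (rule UN_I[OF UNIV_I])
  qed
  have opn: "open (Tpow T n -` W)" for n
    by (rule open_vimage[OF W(1) Tpow_cont[OF contT contiT]])
  have opn': "\<And>n. n \<in> (UNIV::int set) \<Longrightarrow> open (Tpow T n -` W)" using opn by blast
  obtain N where N: "N \<subseteq> UNIV" "finite N" "UNIV \<subseteq> (\<Union>n\<in>N. Tpow T n -` W)"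
    by (rule compactE_image[where S=UNIV and C=UNIV and f="\<lambda>n. Tpow T n -` W", OF Xc opn' cover])
  have "\<forall>y. \<exists>n\<in>N. Tpow T n y \<in> W" using N(3) by blast
  then show ?thesis using N(2) by blast
qed

lemma K3:
  assumes "compact V" "finite N"
  shows "compact (\<Union>n\<in>N. (\<lambda>p. snd (skew_pow T f (- n) p)) ` (UNIV \<times> V))"
proof (rule compact_UN[OF assms(2)])
  fix n
  have "continuous_on UNIV (\<lambda>p. snd (skew_pow T f (- n) p))"
    by (rule continuous_on_snd[OF spc])
  then show "compact ((\<lambda>p. snd (skew_pow T f (- n) p)) ` (UNIV \<times> V))"
    by (rule compact_continuous_image[OF continuous_on_subset compact_Times[OF Xc assms(1)]]) auto
qed

lemma K_exists: "\<exists>K. compact K \<and> (\<forall>y. \<exists>k\<in>K. (y, k) \<in> C)"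
proof -
  obtain W U V where WUV: "open W" "W \<noteq> {}" "compact V" "U \<subseteq> V" "\<forall>y'\<in>W. \<exists>u\<in>U. (y', u) \<in> C"
    using K1 by blast
  obtain N where N: "finite N" "\<forall>y. \<exists>n\<in>N. Tpow T n y \<in> W" using K2[OF WUV(1,2)] by blast
  define K where "K = (\<Union>n\<in>N. (\<lambda>p. snd (skew_pow T f (- n) p)) ` (UNIV \<times> V))"
  have cK: "compact K" unfolding K_def by (rule K3[OF WUV(3) N(1)])
  have "\<exists>k\<in>K. (y, k) \<in> C" for y
  proof -
    obtain n where n: "n \<in> N" "Tpow T n y \<in> W" using N(2) by blast
    obtain u where u: "u \<in> U" "(Tpow T n y, u) \<in> C" using WUV(5) n(2) by blast
    have yy: "Tpow T (- n) (Tpow T n y) = y" using Tpow_add[OF bijT, of "- n" n y] by simp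
    define q' where "q' = skew_pow T f (- n) (Tpow T n y, u)"
    have mem: "q' \<in> C" unfolding q'_def by (rule invC[OF u(2)])
    have eq: "q' = (y, snd q')" unfolding q'_def by (simp add: skew_pow_def yy)
    have i1: "(y, snd q') \<in> C" by (subst eq[symmetric]) (rule mem)
    have "(Tpow T n y, u) \<in> UNIV \<times> V" using u(1) WUV(4) by blast
    then have "snd q' \<in> (\<lambda>p. snd (skew_pow T f (- n) p)) ` (UNIV \<times> V)"
      unfolding q'_def by (rule imageI)
    then have i2: "snd q' \<in> K" unfolding K_def by (rule UN_I[OF n(1)])
    show ?thesis using i1 i2 by blast
  qed
  then show ?thesis using cK by blast
qed

lemma C_in_prod:
  assumes K: "compact K" "\<forall>y. \<exists>k\<in>K. (y, k) \<in> C"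
  shows "C \<subseteq> UNIV \<times> setprod K Sig"
proof -
  have cl: "closed (UNIV \<times> setprod K Sig)"
    by (intro closed_Times closed_UNIV closed_setprod[OF tg K(1) Sig_closed])
  have "skew_orbit T f p0 \<subseteq> UNIV \<times> setprod K Sig"
  proof
    fix r assume "r \<in> skew_orbit T f p0"
    then obtain n where rn: "r = skew_pow T f n p0" unfolding skew_orbit_def by blast
    obtain x' t where xt: "skew_pow T f n p0 = (x', t)" by (cases "skew_pow T f n p0")
    have trn: "closure (skew_orbit T f (x', t)) = C" using trans_shift[of n] xt by simp
    obtain k where k: "k \<in> K" "(x', k) \<in> C" using K(2) by blast
    have "- k + t \<in> Sig" by (rule lemE[OF trn k(2)])
    moreover have "t = k + (- k + t)" by (simp add: add.assoc[symmetric])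
    ultimately have "t \<in> setprod K Sig" unfolding setprod_def using k(1) by (intro CollectI exI[of _ k] exI[of _ "- k + t"]) simp
    then show "r \<in> UNIV \<times> setprod K Sig" using rn xt by simp
  qed
  note cm = closure_minimal[OF this cl]
  show ?thesis using cm Cdef by blast
qed

lemma fibre_decomp:
  assumes K: "compact K" "\<forall>y. \<exists>k\<in>K. (y, k) \<in> C" and zc: "(z, c) \<in> C"
  shows "\<exists>k\<in>K. \<exists>h\<in>Sig. c = k + h \<and> (z, k) \<in> C"
proof -
  have "c \<in> setprod K Sig" using C_in_prod[OF K] zc by blast
  then obtain k h where kh: "c = k + h" "k \<in> K" "h \<in> Sig" unfolding setprod_def by blast
  have "(z, c + - h) \<in> C" by (rule SigD[OF kh(3) zc])
  moreover have "c + - h = k" using kh(1) by (simp add: add.assoc)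
  ultimately have "(z, k) \<in> C" by simp
  then show ?thesis using kh by blast
qed

lemma fibre_trans:
  assumes tr: "closure (skew_orbit T f (x, g)) = C" and xg: "(x, g) \<in> C"
  shows "fibre C x = lcoset g (Stab C)"
proof
  show "fibre C x \<subseteq> lcoset g (Stab C)"
  proof
    fix g' assume "g' \<in> fibre C x"
    then have g': "(x, g') \<in> C" unfolding fibre_def by simp
    have "- (- g' + g) \<in> Sig" by (rule Sig_sym[OF lemE[OF tr g']])
    moreover have "g + - (- g' + g) = g'" by (simp add: minus_add add.assoc[symmetric])
    ultimately show "g' \<in> lcoset g (Stab C)" unfolding lcoset_def Stab_eq by force
  qed
  show "lcoset g (Stab C) \<subseteq> fibre C x"
  proof
    fix a assume "a \<in> lcoset g (Stab C)"
    then obtain h where h: "h \<in> Sig" "a = g + h" unfolding lcoset_def Stab_eq by blast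
    have "(x, g + - (- h)) \<in> C" by (rule SigD[OF Sig_sym[OF h(1)] xg])
    then show "a \<in> fibre C x" unfolding fibre_def using h(2) by simp
  qed
qed

lemma fibre_closed: "closed (fibre C x)"
proof -
  have "fibre C x = (\<lambda>g. (x, g)) -` C" unfolding fibre_def by auto
  moreover have "continuous_on UNIV (\<lambda>g::'g. (x, g))"
    by (intro continuous_on_Pair continuous_on_const continuous_on_id)
  ultimately show ?thesis using closed_vimage[OF closedC] by simp
qed

lemma fibre_prod:
  assumes K: "compact K" "\<forall>y. \<exists>k\<in>K. (y, k) \<in> C"
  shows "\<exists>K'. compact K' \<and> fibre C x = setprod K' (Stab C)"
proof (intro exI conjI)
  show "compact (K \<inter> fibre C x)" by (rule compact_Int_closed[OF K(1) fibre_closed])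
  show "fibre C x = setprod (K \<inter> fibre C x) (Stab C)"
  proof
    show "fibre C x \<subseteq> setprod (K \<inter> fibre C x) (Stab C)"
    proof
      fix c assume "c \<in> fibre C x"
      then have "(x, c) \<in> C" unfolding fibre_def by simp
      from fibre_decomp[OF K this] obtain k h where "k \<in> K" "h \<in> Sig" "c = k + h" "(x, k) \<in> C"
        by blast
      then show "c \<in> setprod (K \<inter> fibre C x) (Stab C)"
        unfolding setprod_def fibre_def Stab_eq by blast
    qed
    show "setprod (K \<inter> fibre C x) (Stab C) \<subseteq> fibre C x"
    proof
      fix c assume "c \<in> setprod (K \<inter> fibre C x) (Stab C)"
      then obtain k h where kh: "c = k + h" "(x, k) \<in> C" "h \<in> Sig"
        unfolding setprod_def fibre_def Stab_eq by blast
      have "(x, k + - (- h)) \<in> C" by (rule SigD[OF Sig_sym[OF kh(3)] kh(2)])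
      then show "c \<in> fibre C x" unfolding fibre_def using kh(1) by simp
    qed
  qed
qed

end

definition subgrp :: "'g::group_add set \<Rightarrow> bool" where
  "subgrp H \<longleftrightarrow> 0 \<in> H \<and> (\<forall>a\<in>H. \<forall>b\<in>H. a + b \<in> H) \<and> (\<forall>a\<in>H. - a \<in> H)"

lemma lcoset_img: "(\<lambda>a. c + a) ` lcoset g H = lcoset (c + g) H"
  unfolding lcoset_def by (auto simp: image_image add.assoc)

lemma lcoset_self: "subgrp H \<Longrightarrow> g \<in> lcoset g H"
  unfolding lcoset_def subgrp_def by (metis add.right_neutral image_eqI)

lemma lcoset_eq:
  assumes H: "subgrp H"
  shows "lcoset g H = lcoset v H \<longleftrightarrow> - v + g \<in> H"
proof
  assume e: "lcoset g H = lcoset v H"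
  have "g \<in> lcoset v H" using lcoset_self[OF H, of g] e by simp
  then obtain h where "h \<in> H" "g = v + h" unfolding lcoset_def by blast
  then show "- v + g \<in> H" by (simp add: add.assoc[symmetric])
next
  assume h0: "- v + g \<in> H"
  define h0' where "h0' = - v + g"
  have g: "g = v + h0'" unfolding h0'_def by (simp add: add.assoc[symmetric])
  have hH: "h0' \<in> H" using h0 h0'_def by simp
  show "lcoset g H = lcoset v H"
  proof
    show "lcoset g H \<subseteq> lcoset v H"
    proof
      fix a assume "a \<in> lcoset g H"
      then obtain h where h: "h \<in> H" "a = g + h" unfolding lcoset_def by blast
      have "h0' + h \<in> H" using H h hH unfolding subgrp_def by blast
      moreover have "a = v + (h0' + h)" using h(2) g by (simp add: add.assoc)
      ultimately show "a \<in> lcoset v H" unfolding lcoset_def by blast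
    qed
    show "lcoset v H \<subseteq> lcoset g H"
    proof
      fix a assume "a \<in> lcoset v H"
      then obtain h where h: "h \<in> H" "a = v + h" unfolding lcoset_def by blast
      have "- h0' + h \<in> H" using H h hH unfolding subgrp_def by blast
      moreover have "a = g + (- h0' + h)" using h(2) g by (simp add: add.assoc[symmetric])
      ultimately show "a \<in> lcoset g H" unfolding lcoset_def by blast
    qed
  qed
qed

lemma istop_coset:
  fixes H :: "'g::{group_add,topological_space} set"
  shows "istopology (\<lambda>U. U \<subseteq> range (\<lambda>g. lcoset g H) \<and> open {g. lcoset g H \<in> U})"
proof -
  define P where "P = (\<lambda>U. U \<subseteq> range (\<lambda>g. lcoset g H) \<and> open {g. lcoset g H \<in> U})"
  have 1: "P (S \<inter> T)" if S: "P S" and T: "P T" for S T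
  proof -
    have "{g. lcoset g H \<in> S \<inter> T} = {g. lcoset g H \<in> S} \<inter> {g. lcoset g H \<in> T}" by auto
    then show ?thesis using S T unfolding P_def by auto
  qed
  have 2: "P (\<Union>KK)" if K: "\<forall>K\<in>KK. P K" for KK
  proof -
    have "{g. lcoset g H \<in> \<Union>KK} = (\<Union>K\<in>KK. {g. lcoset g H \<in> K})" by auto
    moreover have "open (\<Union>K\<in>KK. {g. lcoset g H \<in> K})" using K unfolding P_def by auto
    ultimately show ?thesis using K unfolding P_def by auto
  qed
  have "istopology P" unfolding istopology_def using 1 2 by blast
  then show ?thesis unfolding P_def .
qed

lemma openin_coset:
  "openin (coset_space_topology H) U \<longleftrightarrow> U \<subseteq> range (\<lambda>g. lcoset g H) \<and> open {g. lcoset g H \<in> U}"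
  unfolding coset_space_topology_def using istop_coset[of H] by simp

lemma topspace_coset: "topspace (coset_space_topology H) = range (\<lambda>g. lcoset g H)"
proof -
  have "openin (coset_space_topology H) (range (\<lambda>g. lcoset g H))"
    unfolding openin_coset by simp
  then have "range (\<lambda>g. lcoset g H) \<subseteq> topspace (coset_space_topology H)"
    by (rule openin_subset)
  moreover have "topspace (coset_space_topology H) \<subseteq> range (\<lambda>g. lcoset g H)"
    unfolding topspace_def using openin_coset by blast
  ultimately show ?thesis by blast
qed

lemma cont_q: "continuous_map euclidean (coset_space_topology H) (\<lambda>g. lcoset g H)"
  unfolding continuous_map topspace_coset openin_coset by auto

lemma open_saturation:
  fixes H V :: "'g::{group_add,topological_space} set"
  assumes tg: "topological_group TYPE('g)" and H: "subgrp H" and V: "open V"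
  shows "openin (coset_space_topology H) ((\<lambda>g. lcoset g H) ` V)"
proof -
  have e: "{g. lcoset g H \<in> (\<lambda>g. lcoset g H) ` V} = (\<Union>h\<in>H. (\<lambda>g. g + - h) -` V)"
  proof
    show "{g. lcoset g H \<in> (\<lambda>g. lcoset g H) ` V} \<subseteq> (\<Union>h\<in>H. (\<lambda>g. g + - h) -` V)"
    proof
      fix g assume "g \<in> {g. lcoset g H \<in> (\<lambda>g. lcoset g H) ` V}"
      then obtain v where v: "v \<in> V" "lcoset g H = lcoset v H" by auto
      then have "- v + g \<in> H" using lcoset_eq[OF H] by blast
      moreover have "g + - (- v + g) = v" by (simp add: minus_add add.assoc[symmetric])
      ultimately show "g \<in> (\<Union>h\<in>H. (\<lambda>g. g + - h) -` V)" using v(1) by force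
    qed
    show "(\<Union>h\<in>H. (\<lambda>g. g + - h) -` V) \<subseteq> {g. lcoset g H \<in> (\<lambda>g. lcoset g H) ` V}"
    proof
      fix g assume "g \<in> (\<Union>h\<in>H. (\<lambda>g. g + - h) -` V)"
      then obtain h where h: "h \<in> H" "g + - h \<in> V" by auto
      have "- (g + - h) + g = h" by (simp add: minus_add add.assoc)
      then have "lcoset g H = lcoset (g + - h) H" using lcoset_eq[OF H] h(1) by simp
      then show "g \<in> {g. lcoset g H \<in> (\<lambda>g. lcoset g H) ` V}" using h(2) by blast
    qed
  qed
  have "open ((\<lambda>g. g + - h) -` V)" for h
  proof -
    have "continuous_on UNIV (\<lambda>g::'g. g + - h)"
      by (intro tg_add_cont[OF tg] continuous_on_id continuous_on_const)
    then show ?thesis by (rule open_vimage[OF V])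
  qed
  then have "open {g. lcoset g H \<in> (\<lambda>g. lcoset g H) ` V}" unfolding e by blast
  then show ?thesis unfolding openin_coset by blast
qed

lemma cont_Phi:
  fixes \<phi> :: "'a::topological_space \<Rightarrow> 'a" and \<psi> :: "'a \<Rightarrow> 'g::{group_add,topological_space}"
  assumes tg: "topological_group TYPE('g)" and H: "subgrp H"
    and c\<phi>: "continuous_on UNIV \<phi>" and c\<psi>: "continuous_on UNIV \<psi>"
  shows "continuous_map (prod_topology euclidean (coset_space_topology H))
           (prod_topology euclidean (coset_space_topology H))
           (\<lambda>p. (\<phi> (fst p), (\<lambda>a. \<psi> (fst p) + a) ` snd p))"
  unfolding continuous_map_pairwise
proof (intro conjI)
  have "continuous_map (prod_topology euclidean (coset_space_topology H)) euclidean (\<phi> \<circ> fst)"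
    by (rule continuous_map_compose[OF continuous_map_fst]) (simp add: c\<phi>)
  then show "continuous_map (prod_topology euclidean (coset_space_topology H)) euclidean
     (fst \<circ> (\<lambda>p. (\<phi> (fst p), (\<lambda>a. \<psi> (fst p) + a) ` snd p)))"
    by (simp add: o_def)
  define q where "q = (\<lambda>g. lcoset g H)"
  have img: "(\<lambda>a. \<psi> x + a) ` q g = q (\<psi> x + g)" for x g unfolding q_def by (rule lcoset_img)
  have ts: "topspace (prod_topology euclidean (coset_space_topology H)) = UNIV \<times> range q"
    by (simp add: topspace_coset q_def)
  have cpsi2: "continuous_on UNIV (\<lambda>p::'a \<times> 'g. \<psi> (fst p) + snd p)"
    by (intro tg_add_cont[OF tg] continuous_on_compose2[OF c\<psi> continuous_on_fst[OF continuous_on_id]]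
        continuous_on_snd[OF continuous_on_id]) auto
  show "continuous_map (prod_topology euclidean (coset_space_topology H)) (coset_space_topology H)
     (snd \<circ> (\<lambda>p. (\<phi> (fst p), (\<lambda>a. \<psi> (fst p) + a) ` snd p)))"
    unfolding continuous_map
  proof (intro conjI allI impI)
    show "(snd \<circ> (\<lambda>p. (\<phi> (fst p), (\<lambda>a. \<psi> (fst p) + a) ` snd p))) `
        topspace (prod_topology euclidean (coset_space_topology H)) \<subseteq> topspace (coset_space_topology H)"
      unfolding ts topspace_coset q_def[symmetric] using img by auto
    fix U assume U: "openin (coset_space_topology H) U"
    define Uh where "Uh = {g. q g \<in> U}"
    have oUh: "open Uh" using U unfolding Uh_def q_def openin_coset by blast
    show "openin (prod_topology euclidean (coset_space_topology H))
       {x \<in> topspace (prod_topology euclidean (coset_space_topology H)).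
        (snd \<circ> (\<lambda>p. (\<phi> (fst p), (\<lambda>a. \<psi> (fst p) + a) ` snd p))) x \<in> U}"
      unfolding openin_prod_topology_alt
    proof (intro allI impI)
      fix x S
      assume xS: "(x, S) \<in> {x \<in> topspace (prod_topology euclidean (coset_space_topology H)).
        (snd \<circ> (\<lambda>p. (\<phi> (fst p), (\<lambda>a. \<psi> (fst p) + a) ` snd p))) x \<in> U}"
      then obtain a where Sa: "S = q a" unfolding ts by auto
      have "q (\<psi> x + a) \<in> U" using xS Sa img by simp
      then have "(x, a) \<in> (\<lambda>p. \<psi> (fst p) + snd p) -` Uh" unfolding Uh_def by simp
      moreover have "open ((\<lambda>p. \<psi> (fst p) + snd p) -` Uh)" by (rule open_vimage[OF oUh cpsi2])
      ultimately obtain A B where AB: "open A" "open B" "(x, a) \<in> A \<times> B"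
          "A \<times> B \<subseteq> (\<lambda>p. \<psi> (fst p) + snd p) -` Uh"
        by (rule_tac open_prod_elim[of "(\<lambda>p. \<psi> (fst p) + snd p) -` Uh" "(x, a)"]) auto
      have oqB: "openin (coset_space_topology H) (q ` B)"
        unfolding q_def by (rule open_saturation[OF tg H AB(2)])
      have sub: "A \<times> q ` B \<subseteq> {x \<in> topspace (prod_topology euclidean (coset_space_topology H)).
        (snd \<circ> (\<lambda>p. (\<phi> (fst p), (\<lambda>a. \<psi> (fst p) + a) ` snd p))) x \<in> U}"
      proof
        fix p assume "p \<in> A \<times> q ` B"
        then obtain x' v where p: "p = (x', q v)" "x' \<in> A" "v \<in> B" by auto
        then have "\<psi> x' + v \<in> Uh" using AB(4) by auto
        then have "q (\<psi> x' + v) \<in> U" unfolding Uh_def by simp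
        then show "p \<in> {x \<in> topspace (prod_topology euclidean (coset_space_topology H)).
            (snd \<circ> (\<lambda>p. (\<phi> (fst p), (\<lambda>a. \<psi> (fst p) + a) ` snd p))) x \<in> U}"
          unfolding ts using p img by auto
      qed
      show "\<exists>U' V. openin euclidean U' \<and> openin (coset_space_topology H) V \<and> x \<in> U' \<and> S \<in> V \<and>
          U' \<times> V \<subseteq> {x \<in> topspace (prod_topology euclidean (coset_space_topology H)).
            (snd \<circ> (\<lambda>p. (\<phi> (fst p), (\<lambda>a. \<psi> (fst p) + a) ` snd p))) x \<in> U}"
        using AB(1,3) oqB sub Sa by (intro exI[of _ A] exI[of _ "q ` B"]) auto
    qed
  qed
qed

context skewsys
begin

lemma density:
  assumes K: "compact K" "\<forall>y. \<exists>k\<in>K. (y, k) \<in> C"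
    and yb: "(y, b) \<in> C" and zc: "(z, c) \<in> C"
    and W: "open W" "z \<in> W" and U: "open U" "c \<in> U"
    and sat: "\<And>a h. a \<in> U \<Longrightarrow> h \<in> Sig \<Longrightarrow> a + h \<in> U"
  shows "\<exists>n. skew_pow T f n (y, b) \<in> W \<times> U"
proof -
  obtain x0 g0 where p0e: "p0 = (x0, g0)" by (cases p0)
  have "(z, c) \<in> closure (skew_orbit T f p0)" using zc Cdef by simp
  then have "(W \<times> U) \<inter> closure (skew_orbit T f p0) \<noteq> {}" using W(2) U(2) by blast
  then have "(W \<times> U) \<inter> skew_orbit T f p0 \<noteq> {}"
    using open_Int_closure_eq_empty[OF open_Times[OF W(1) U(1)]] by blast
  then obtain r where r: "r \<in> W \<times> U" "r \<in> skew_orbit T f p0" by blast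
  then obtain n1 where "r = skew_pow T f n1 p0" unfolding skew_orbit_def by blast
  then have n1: "skew_pow T f n1 p0 \<in> W \<times> U" using r(1) by simp
  define S where "S = skew_pow T f n1 -` (W \<times> U)"
  have oS: "open S" unfolding S_def by (rule open_vimage[OF open_Times[OF W(1) U(1)] spc])
  have "p0 \<in> S" using n1 S_def by simp
  then obtain W1 U1 where WU1: "open W1" "open U1" "p0 \<in> W1 \<times> U1" "W1 \<times> U1 \<subseteq> S"
    by (rule_tac open_prod_elim[of S p0]) (auto simp: oS)
  have x0W1: "x0 \<in> W1" "g0 \<in> U1" using WU1(3) p0e by auto
  define US where "US = {a. \<exists>u\<in>U1. \<exists>h\<in>Sig. a = u + h}"
  have US_eq: "US = (\<Union>h\<in>Sig. (\<lambda>a. a + - h) -` U1)"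
  proof
    show "US \<subseteq> (\<Union>h\<in>Sig. (\<lambda>a. a + - h) -` U1)"
    proof
      fix a assume "a \<in> US"
      then obtain u h where uh: "u \<in> U1" "h \<in> Sig" "a = u + h" unfolding US_def by blast
      then have "a + - h = u" by (simp add: add.assoc)
      then show "a \<in> (\<Union>h\<in>Sig. (\<lambda>a. a + - h) -` U1)" using uh by force
    qed
    show "(\<Union>h\<in>Sig. (\<lambda>a. a + - h) -` U1) \<subseteq> US"
    proof
      fix a assume "a \<in> (\<Union>h\<in>Sig. (\<lambda>a. a + - h) -` U1)"
      then obtain h where h: "h \<in> Sig" "a + - h \<in> U1" by blast
      have "a = (a + - h) + h" by (simp add: add.assoc)
      then show "a \<in> US" unfolding US_def using h by blast
    qed
  qed
  have oUS: "open US"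
  proof -
    have "open ((\<lambda>a. a + - h) -` U1)" for h
    proof -
      have "continuous_on UNIV (\<lambda>a::'g. a + - h)"
        by (intro tg_add_cont[OF tg] continuous_on_id continuous_on_const)
      then show ?thesis by (rule open_vimage[OF WU1(2)])
    qed
    then show ?thesis unfolding US_eq by blast
  qed
  define K' where "K' = K \<inter> - US"
  have cK': "compact K'" unfolding K'_def using compact_Int_closed[OF K(1)] oUS by (simp add: closed_Compl)
  define P where "P = fst ` ((UNIV \<times> K') \<inter> C)"
  have cP: "closed P"
  proof -
    have "compact ((UNIV \<times> K') \<inter> C)" by (rule compact_Int_closed[OF compact_Times[OF Xc cK'] closedC])
    then have "compact P" unfolding P_def
      by (rule compact_continuous_image[OF continuous_on_fst[OF continuous_on_id]])
    then show ?thesis by (rule compact_imp_closed)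
  qed
  have x0P: "x0 \<notin> P"
  proof
    assume "x0 \<in> P"
    then obtain k where k: "k \<in> K'" "(x0, k) \<in> C" unfolding P_def by force
    have trn0: "closure (skew_orbit T f (x0, g0)) = C" using Cdef p0e by simp
    have "- (- k + g0) \<in> Sig" by (rule Sig_sym[OF lemE[OF trn0 k(2)]])
    moreover have "k = g0 + - (- k + g0)" by (simp add: minus_add add.assoc[symmetric])
    ultimately have "k \<in> US" unfolding US_def using x0W1(2) by blast
    then show False using k(1) unfolding K'_def by blast
  qed
  define W2 where "W2 = W1 - P"
  have oW2: "open W2" unfolding W2_def using WU1(1) cP by (rule open_Diff)
  have "x0 \<in> W2" unfolding W2_def using x0W1(1) x0P by blast
  then have "W2 \<noteq> {}" by blast
  from meets_orbit[OF oW2 this, where y=y] obtain m where m: "Tpow T m y \<in> W2" by (elim exE)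
  obtain y1 t where e1: "skew_pow T f m (y, b) = (y1, t)" by (cases "skew_pow T f m (y, b)")
  have y1: "y1 = Tpow T m y" using e1 by (simp add: skew_pow_def)
  have y1t: "(y1, t) \<in> C" using invC[OF yb, of m] e1 by simp
  from fibre_decomp[OF K y1t] obtain k h where kh: "k \<in> K" "h \<in> Sig" "t = k + h" "(y1, k) \<in> C"
    by blast
  have "k \<in> US"
  proof (rule ccontr)
    assume "k \<notin> US"
    then have "k \<in> K'" unfolding K'_def using kh(1) by blast
    then have "y1 \<in> P" unfolding P_def using kh(4) by force
    then show False using m y1 unfolding W2_def by blast
  qed
  then obtain u h' where uh: "u \<in> U1" "h' \<in> Sig" "k = u + h'" unfolding US_def by blast
  have hh: "h' + h \<in> Sig" by (rule Sig_add[OF uh(2) kh(2)])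
  have t: "t = u + (h' + h)" using kh(3) uh(3) by (simp add: add.assoc)
  have "(y1, u) \<in> S" using WU1(4) m y1 uh(1) unfolding W2_def by blast
  then have in1: "(Tpow T n1 y1, cocycle T f n1 y1 + u) \<in> W \<times> U" unfolding S_def by (simp add: skew_pow_def)
  have "skew_pow T f (n1 + m) (y, b) = skew_pow T f n1 (y1, t)" by (simp add: skew_pow_add[OF bijT] e1)
  also have "\<dots> = (Tpow T n1 y1, (cocycle T f n1 y1 + u) + (h' + h))" by (simp add: skew_pow_def t add.assoc)
  finally have "skew_pow T f (n1 + m) (y, b) \<in> W \<times> U" using in1 sat[OF _ hh] by auto
  then show ?thesis by (rule exI)
qed

lemma subgrp_H: "subgrp (Stab C)"
  unfolding subgrp_def Stab_eq using Sig_zero Sig_add Sig_sym by blast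

lemma q_sat: "h \<in> Sig \<Longrightarrow> lcoset (a + h) (Stab C) = lcoset a (Stab C)"
  using lcoset_eq[OF subgrp_H, of "a + h" a] by (simp add: Stab_eq add.assoc[symmetric])

lemma skew1: "skew_pow T f 1 (x, g) = (T x, f x + g)"
  by (simp add: skew_pow_def Tpow_def cocycle_def)

lemma skewm1: "skew_pow T f (-1) (x, g) = (inv T x, - f (inv T x) + g)"
  by (simp add: skew_pow_def Tpow_def cocycle_def)

lemma quot_set_mem: "w \<in> quot_set C H \<longleftrightarrow> (\<exists>x g. (x, g) \<in> C \<and> w = (x, lcoset g H))"
  unfolding quot_set_def by auto

lemma claim_compact:
  "compactin (prod_topology euclidean (coset_space_topology (Stab C))) (quot_set C (Stab C))"
proof -
  obtain K where K: "compact K" "\<forall>y. \<exists>k\<in>K. (y, k) \<in> C" using K_exists by blast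
  define M where "M = (UNIV \<times> K) \<inter> C"
  have "compact M" unfolding M_def by (rule compact_Int_closed[OF compact_Times[OF Xc K(1)] closedC])
  then have cM: "compactin (prod_topology euclidean euclidean) M" by simp
  have cid: "continuous_map euclidean euclidean (\<lambda>x::'a. x)" by (simp add: continuous_on_id)
  have cm: "continuous_map (prod_topology euclidean euclidean) (prod_topology euclidean (coset_space_topology (Stab C)))
      (\<lambda>(x::'a, g). (x, lcoset g (Stab C)))"
  proof -
    have e: "(\<lambda>(x::'a, g). (x, lcoset g (Stab C))) = (\<lambda>p. (fst p, (\<lambda>g. lcoset g (Stab C)) (snd p)))"
      by (auto simp: fun_eq_iff)
    have c2: "continuous_map (prod_topology euclidean euclidean) (coset_space_topology (Stab C))
        (\<lambda>p::'a \<times> 'g. (\<lambda>g. lcoset g (Stab C)) (snd p))"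
      using continuous_map_compose[OF continuous_map_snd cont_q, of euclidean "Stab C"] unfolding o_def .
    show ?thesis unfolding e
      by (rule continuous_map_pairedI[OF continuous_map_fst c2])
  qed
  have "quot_set C (Stab C) = (\<lambda>(x, g). (x, lcoset g (Stab C))) ` M"
  proof
    show "(\<lambda>(x, g). (x, lcoset g (Stab C))) ` M \<subseteq> quot_set C (Stab C)"
      unfolding M_def quot_set_def by blast
    show "quot_set C (Stab C) \<subseteq> (\<lambda>(x, g). (x, lcoset g (Stab C))) ` M"
    proof
      fix w assume "w \<in> quot_set C (Stab C)"
      then obtain z c where zc: "(z, c) \<in> C" "w = (z, lcoset c (Stab C))" unfolding quot_set_mem by blast
      from fibre_decomp[OF K zc(1)] obtain k h where kh: "k \<in> K" "h \<in> Sig" "c = k + h" "(z, k) \<in> C"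
        by blast
      have "lcoset c (Stab C) = lcoset k (Stab C)" using q_sat[OF kh(2), of k] kh(3) by simp
      then have "w = (\<lambda>(x, g). (x, lcoset g (Stab C))) (z, k)" using zc(2) by simp
      moreover have "(z, k) \<in> M" unfolding M_def using kh by blast
      ultimately show "w \<in> (\<lambda>(x, g). (x, lcoset g (Stab C))) ` M" by blast
    qed
  qed
  then show ?thesis using image_compactin[OF cM cm] by simp
qed

lemma claim_maps: "quot_map T f ` quot_set C (Stab C) \<subseteq> quot_set C (Stab C)"
proof
  fix w assume "w \<in> quot_map T f ` quot_set C (Stab C)"
  then obtain w0 where w0: "w0 \<in> quot_set C (Stab C)" "w = quot_map T f w0" by blast
  then obtain x g where xg: "(x, g) \<in> C" "w = quot_map T f (x, lcoset g (Stab C))"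
    unfolding quot_set_mem by blast
  have "w = (T x, lcoset (f x + g) (Stab C))" using xg(2) by (simp add: quot_map_def lcoset_img)
  moreover have "(T x, f x + g) \<in> C" using invC[OF xg(1), of 1] by (simp add: skew1)
  ultimately show "w \<in> quot_set C (Stab C)" unfolding quot_set_mem by blast
qed

lemma topspace_quot: "topspace (quot_top C (Stab C)) = quot_set C (Stab C)"
proof -
  have "quot_set C (Stab C) \<subseteq> topspace (prod_topology euclidean (coset_space_topology (Stab C)))"
    unfolding quot_set_def by (auto simp: topspace_coset)
  then show ?thesis unfolding quot_top_def by auto
qed

lemma claim_homeo: "homeomorphic_map (quot_top C (Stab C)) (quot_top C (Stab C)) (quot_map T f)"
proof -
  define qi where "qi = (\<lambda>p. (inv T (fst p), (\<lambda>a. - f (inv T (fst p)) + a) ` snd p))"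
  have qm: "quot_map T f = (\<lambda>p. (T (fst p), (\<lambda>a. f (fst p) + a) ` snd p))"
    by (rule ext) (simp add: quot_map_def)
  have c1: "continuous_map (prod_topology euclidean (coset_space_topology (Stab C)))
      (prod_topology euclidean (coset_space_topology (Stab C))) (quot_map T f)"
    unfolding qm by (rule cont_Phi[OF tg subgrp_H contT fc])
  have cfi: "continuous_on UNIV (\<lambda>x. - f (inv T x))"
    by (rule tg_minus_cont[OF tg continuous_on_compose2[OF fc contiT]]) auto
  have c2: "continuous_map (prod_topology euclidean (coset_space_topology (Stab C)))
      (prod_topology euclidean (coset_space_topology (Stab C))) qi"
    unfolding qi_def by (rule cont_Phi[OF tg subgrp_H contiT cfi])
  have i1: "qi ` quot_set C (Stab C) \<subseteq> quot_set C (Stab C)"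
  proof
    fix w assume "w \<in> qi ` quot_set C (Stab C)"
    then obtain w0 where w0: "w0 \<in> quot_set C (Stab C)" "w = qi w0" by blast
    then obtain x g where xg: "(x, g) \<in> C" "w = qi (x, lcoset g (Stab C))"
      unfolding quot_set_mem by blast
    have "w = (inv T x, lcoset (- f (inv T x) + g) (Stab C))" using xg(2) by (simp add: qi_def lcoset_img)
    moreover have "(inv T x, - f (inv T x) + g) \<in> C" using invC[OF xg(1), of "-1"] by (simp add: skewm1)
    ultimately show "w \<in> quot_set C (Stab C)" unfolding quot_set_mem by blast
  qed
  have inv1: "qi (quot_map T f w) = w" for w
    by (cases w) (simp add: quot_map_def qi_def image_image inv_f_f[OF bij_is_inj[OF bijT]] add.assoc[symmetric])
  have inv2: "quot_map T f (qi w) = w" for w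
    by (cases w) (simp add: quot_map_def qi_def image_image surj_f_inv_f[OF bij_is_surj[OF bijT]] add.assoc[symmetric])
  have m1: "continuous_map (quot_top C (Stab C)) (quot_top C (Stab C)) (quot_map T f)"
    unfolding quot_top_def
    by (rule continuous_map_into_subtopology[OF continuous_map_from_subtopology[OF c1]])
      (use claim_maps topspace_quot in \<open>auto simp: quot_top_def\<close>)
  have m2: "continuous_map (quot_top C (Stab C)) (quot_top C (Stab C)) qi"
    unfolding quot_top_def
    by (rule continuous_map_into_subtopology[OF continuous_map_from_subtopology[OF c2]])
      (use i1 topspace_quot in \<open>auto simp: quot_top_def\<close>)
  show ?thesis unfolding homeomorphic_map_maps homeomorphic_maps_def
    using m1 m2 inv1 inv2 by blast
qed

lemma claim_min:
  "\<forall>p \<in> quot_set C (Stab C).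
     (quot_top C (Stab C)) closure_of (range (\<lambda>n. quot_pow T f n p)) = quot_set C (Stab C)"
proof
  fix p assume "p \<in> quot_set C (Stab C)"
  then obtain y b where yb: "(y, b) \<in> C" "p = (y, lcoset b (Stab C))" unfolding quot_set_mem by blast
  have qp: "quot_pow T f n p = (Tpow T n y, lcoset (cocycle T f n y + b) (Stab C))" for n
    using yb(2) by (simp add: quot_pow_def lcoset_img)
  obtain K where K: "compact K" "\<forall>y. \<exists>k\<in>K. (y, k) \<in> C" using K_exists by blast
  show "(quot_top C (Stab C)) closure_of (range (\<lambda>n. quot_pow T f n p)) = quot_set C (Stab C)"
  proof
    show "(quot_top C (Stab C)) closure_of (range (\<lambda>n. quot_pow T f n p)) \<subseteq> quot_set C (Stab C)"
      using closure_of_subset_topspace[of "quot_top C (Stab C)" "range (\<lambda>n. quot_pow T f n p)"]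
      unfolding topspace_quot .
    show "quot_set C (Stab C) \<subseteq> (quot_top C (Stab C)) closure_of (range (\<lambda>n. quot_pow T f n p))"
    proof
      fix w assume w: "w \<in> quot_set C (Stab C)"
      then obtain z c where zc: "(z, c) \<in> C" "w = (z, lcoset c (Stab C))" unfolding quot_set_mem by blast
      have "\<exists>r\<in>range (\<lambda>n. quot_pow T f n p). r \<in> Ob"
        if Ob: "w \<in> Ob" "openin (quot_top C (Stab C)) Ob" for Ob
      proof -
        obtain Ob' where Ob': "openin (prod_topology euclidean (coset_space_topology (Stab C))) Ob'"
          "Ob = Ob' \<inter> quot_set C (Stab C)"
          using Ob(2) unfolding quot_top_def openin_subtopology by blast
        have zO: "(z, lcoset c (Stab C)) \<in> Ob'" using Ob(1) Ob'(2) zc(2) by blast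
        have "\<forall>x y. (x, y) \<in> Ob' \<longrightarrow> (\<exists>U V. openin euclidean U \<and> openin (coset_space_topology (Stab C)) V \<and>
            x \<in> U \<and> y \<in> V \<and> U \<times> V \<subseteq> Ob')"
          using Ob'(1) unfolding openin_prod_topology_alt .
        then have "\<exists>U V. openin euclidean U \<and> openin (coset_space_topology (Stab C)) V \<and>
            z \<in> U \<and> lcoset c (Stab C) \<in> V \<and> U \<times> V \<subseteq> Ob'" using zO by blast
        then obtain W' U' where WU: "openin euclidean W'" "openin (coset_space_topology (Stab C)) U'"
            "z \<in> W'" "lcoset c (Stab C) \<in> U'" "W' \<times> U' \<subseteq> Ob'" by (elim exE conjE)
        define Uh where "Uh = {g. lcoset g (Stab C) \<in> U'}"
        have oUh: "open Uh" using WU(2) unfolding Uh_def openin_coset by blast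
        have cUh: "c \<in> Uh" using WU(4) unfolding Uh_def by simp
        have sat: "\<And>a h. a \<in> Uh \<Longrightarrow> h \<in> Sig \<Longrightarrow> a + h \<in> Uh"
          using q_sat unfolding Uh_def by simp
        have oW': "open W'" using WU(1) by simp
        have "\<exists>n. skew_pow T f n (y, b) \<in> W' \<times> Uh"
          by (rule density[OF K yb(1) zc(1) oW' WU(3) oUh cUh]) (rule sat)
        then obtain n where n: "skew_pow T f n (y, b) \<in> W' \<times> Uh" by (elim exE)
        have sp: "skew_pow T f n (y, b) = (Tpow T n y, cocycle T f n y + b)" by (simp add: skew_pow_def)
        have nn: "Tpow T n y \<in> W'" "cocycle T f n y + b \<in> Uh" using n unfolding sp by auto
        have "(Tpow T n y, lcoset (cocycle T f n y + b) (Stab C)) \<in> W' \<times> U'"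
          using nn unfolding Uh_def by simp
        then have i1: "quot_pow T f n p \<in> Ob'" using WU(5) qp[of n] by auto
        have mC: "(Tpow T n y, cocycle T f n y + b) \<in> C" using invC[OF yb(1), of n] unfolding sp .
        have i2: "quot_pow T f n p \<in> quot_set C (Stab C)" unfolding qp[of n] quot_set_def
          by (rule image_eqI[OF _ mC]) simp
        have "quot_pow T f n p \<in> Ob" using i1 i2 Ob'(2) by blast
        then show ?thesis by blast
      qed
      then have "\<forall>Ob. w \<in> Ob \<and> openin (quot_top C (Stab C)) Ob \<longrightarrow>
          (\<exists>r\<in>range (\<lambda>n. quot_pow T f n p). r \<in> Ob)" by blast
      then show "w \<in> (quot_top C (Stab C)) closure_of (range (\<lambda>n. quot_pow T f n p))"
        unfolding closure_of_def topspace_quot using w by simp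
    qed
  qed
qed

end

theorem theorem2p1:
  fixes T :: "'a::metric_space \<Rightarrow> 'a"
    and f :: "'a \<Rightarrow> 'g::{group_add, t2_space, second_countable_topology}"
    and C :: "('a \<times> 'g) set"
  assumes X_compact: "compact (UNIV :: 'a set)"
    and T_minimal: "minimal_homeo T"
    and G_topgroup: "topological_group TYPE('g)"
    and G_lc: "locally_compact_space (euclidean :: 'g topology)"
    and f_cont: "continuous_on UNIV f"
    and f_regular: "regular_cocycle T f"
    and C_soc: "surj_orbit_closure T f C"
  shows "(\<forall>x g. (x, g) \<in> C \<and> closure (skew_orbit T f (x, g)) = C
             \<longrightarrow> fibre C x = lcoset g (Stab C))
     \<and> compactin (prod_topology euclidean (coset_space_topology (Stab C))) (quot_set C (Stab C))
     \<and> quot_map T f ` quot_set C (Stab C) \<subseteq> quot_set C (Stab C)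
     \<and> homeomorphic_map (quot_top C (Stab C)) (quot_top C (Stab C)) (quot_map T f)
     \<and> (\<forall>p \<in> quot_set C (Stab C).
          (quot_top C (Stab C)) closure_of (range (\<lambda>n. quot_pow T f n p)) = quot_set C (Stab C))
     \<and> (\<forall>x. \<exists>K. compact K \<and> fibre C x = setprod K (Stab C))"
proof -
  obtain p0 where Cp: "C = closure (skew_orbit T f p0)" and Cs: "fst ` C = UNIV"
    using C_soc unfolding surj_orbit_closure_def by blast
  have mh: "bij T" "continuous_on UNIV T" "continuous_on UNIV (inv T)"
      "\<And>x. closure (range (\<lambda>n. Tpow T n x)) = UNIV"
    using T_minimal unfolding minimal_homeo_def by auto
  interpret S: skewsys T f C p0
    by (rule skewsys.intro) (fact X_compact mh G_topgroup G_lc f_cont Cp Cs)+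
  obtain K where K: "compact K" "\<forall>y. \<exists>k\<in>K. (y, k) \<in> C" using S.K_exists by blast
  have c1: "\<forall>x g. (x, g) \<in> C \<and> closure (skew_orbit T f (x, g)) = C \<longrightarrow> fibre C x = lcoset g (Stab C)"
    using S.fibre_trans by blast
  have c6: "\<forall>x. \<exists>K. compact K \<and> fibre C x = setprod K (Stab C)"
    using S.fibre_prod[OF K] by blast
  show ?thesis using c1 c6 S.claim_compact S.claim_maps S.claim_homeo S.claim_min by blast
qed


end
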